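(* Let $p$ be a density on $\mathbb{R}^d$ satisfying (A1)–(A3) (see context), in particular a Morse function with finitely many critical points and modes $m_1,\ldots,m_k$. Fix $r>0$, $C>0$, let $\epsilon_n=(r\log n/n)^{1/d}$ and $t_n(x)=\left(\frac{C\log n}{n\,p(x)}\right)^{1/d}$. Then there exist positive constants $c_1,c_2$ such that, for all sufficiently large $n$, for every $x\in\mathcal{C}$ with $x\notin\bigcup_{j=1}^kB(m_j,c_1\epsilon_n)$, there exists a ball $B$ of radius $2\epsilon_n$ such that: 1. $\max_{z\in B}\|z-x\|\le c_2t_n(x)$; 2. $x\notin B$; 3. $p(z)>p(x)$ for all $z\in B$.
   Context: (A1) $p$ is supported on a compact set $\mathcal{C}$, bounded and continuous, with $\inf_{x\in\mathcal{C}}p(x)\ge a>0$. (A2) $p$ has bounded continuous first, second and third derivatives. (A3) $p$ is Morse (Hessian nondegenerate at every critical point) with finitely many critical points. Modes are strict local maxima. *)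

theory Defs
  imports "HOL-Analysis.Analysis"
begin

definition strict_local_max :: "('a::metric_space \<Rightarrow> real) \<Rightarrow> 'a \<Rightarrow> bool" where
  "strict_local_max f m \<longleftrightarrow> (\<exists>e>0. \<forall>y\<in>ball m e. y \<noteq> m \<longrightarrow> f y < f m)"

definition morse :: "('a::euclidean_space \<Rightarrow> ('a \<Rightarrow>\<^sub>L real))
                     \<Rightarrow> ('a \<Rightarrow> ('a \<Rightarrow>\<^sub>L ('a \<Rightarrow>\<^sub>L real))) \<Rightarrow> bool" where
  "morse D1 D2 \<longleftrightarrow> finite {x. D1 x = 0} \<and>
     (\<forall>x. D1 x = 0 \<longrightarrow> (\<forall>h. D2 x h = 0 \<longrightarrow> h = 0))"

end

theory Submission
  imports Defs
begin

lemma line_deriv: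
  fixes p :: "'a::euclidean_space \<Rightarrow> real"
  assumes D1: "\<forall>x. (p has_derivative blinfun_apply (D1 x)) (at x)"
  shows "((\<lambda>t. p (x + t *\<^sub>R h)) has_real_derivative (D1 (x + t *\<^sub>R h) h)) (at t)"
proof -
  have "((\<lambda>t. x + t *\<^sub>R h) has_derivative (\<lambda>s. s *\<^sub>R h)) (at t)"
    by (auto intro!: derivative_eq_intros)
  from has_derivative_compose[OF this D1[rule_format, of "x + t *\<^sub>R h"]]
  have "((\<lambda>t. p (x + t *\<^sub>R h)) has_derivative (\<lambda>s. D1 (x + t *\<^sub>R h) (s *\<^sub>R h))) (at t)"
    by (simp add: o_def)
  moreover have "(\<lambda>s. D1 (x + t *\<^sub>R h) (s *\<^sub>R h)) = (*) (D1 (x + t *\<^sub>R h) h)"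
    by (auto simp: blinfun.scaleR_right)
  ultimately show ?thesis
    by (simp add: has_field_derivative_def)
qed

lemma line_deriv1:
  fixes D1 :: "'a::euclidean_space \<Rightarrow> ('a \<Rightarrow>\<^sub>L real)"
  assumes D2: "\<forall>x. (D1 has_derivative blinfun_apply (D2 x)) (at x)"
  shows "((\<lambda>t. D1 (x + t *\<^sub>R h) w) has_real_derivative (D2 (x + t *\<^sub>R h) h w)) (at t)"
proof -
  have "((\<lambda>t. x + t *\<^sub>R h) has_derivative (\<lambda>s. s *\<^sub>R h)) (at t)"
    by (auto intro!: derivative_eq_intros)
  from has_derivative_compose[OF this D2[rule_format, of "x + t *\<^sub>R h"]]
  have "((\<lambda>t. D1 (x + t *\<^sub>R h)) has_derivative (\<lambda>s. D2 (x + t *\<^sub>R h) (s *\<^sub>R h))) (at t)"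
    by (simp add: o_def)
  then have "((\<lambda>t. D1 (x + t *\<^sub>R h) w) has_derivative (\<lambda>s. D2 (x + t *\<^sub>R h) (s *\<^sub>R h) w)) (at t)"
    by (auto intro!: derivative_eq_intros)
  moreover have "(\<lambda>s. D2 (x + t *\<^sub>R h) (s *\<^sub>R h) w) = (*) (D2 (x + t *\<^sub>R h) h w)"
    by (auto simp: blinfun.scaleR_right blinfun.scaleR_left)
  ultimately show ?thesis
    by (simp add: has_field_derivative_def)
qed

lemma D1_lip:
  fixes D1 :: "'a::euclidean_space \<Rightarrow> ('a \<Rightarrow>\<^sub>L real)"
  assumes D2: "\<forall>x. (D1 has_derivative blinfun_apply (D2 x)) (at x)"
    and M: "\<forall>x. norm (D2 x) \<le> M"
  shows "norm (D1 y - D1 x) \<le> M * norm (y - x)"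
  using differentiable_bound[of UNIV D1 "\<lambda>x. blinfun_apply (D2 x)" M y x] D2 M
  by (simp add: norm_blinfun.rep_eq[symmetric])

lemma taylor_lower:
  fixes p :: "'a::euclidean_space \<Rightarrow> real"
  assumes D1: "\<forall>x. (p has_derivative blinfun_apply (D1 x)) (at x)"
    and D2: "\<forall>x. (D1 has_derivative blinfun_apply (D2 x)) (at x)"
    and M: "\<forall>x. norm (D2 x) \<le> M"
  shows "p (x + h) \<ge> p x + D1 x h - M * (norm h)^2"
proof -
  have "\<And>t. 0 \<le> t \<Longrightarrow> t \<le> 1 \<Longrightarrow> ((\<lambda>t. p (x + t *\<^sub>R h)) has_real_derivative (D1 (x + t *\<^sub>R h) h)) (at t)"
    using line_deriv[OF D1] by blast
  from MVT2[OF zero_less_one this] obtain z where z: "0 < z" "z < 1"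
    "p (x + 1 *\<^sub>R h) - p (x + 0 *\<^sub>R h) = (1 - 0) * D1 (x + z *\<^sub>R h) h" by blast
  have "\<bar>D1 (x + z *\<^sub>R h) h - D1 x h\<bar> = norm ((D1 (x + z *\<^sub>R h) - D1 x) h)"
    by (simp add: blinfun.diff_left)
  also have "\<dots> \<le> norm (D1 (x + z *\<^sub>R h) - D1 x) * norm h" by (rule norm_blinfun)
  also have "\<dots> \<le> (M * norm (z *\<^sub>R h)) * norm h"
    using D1_lip[OF D2 M, of "x + z *\<^sub>R h" x] by (intro mult_right_mono) auto
  also have "\<dots> \<le> M * norm h * norm h"
  proof -
    have M0: "M \<ge> 0" using M norm_ge_zero order_trans by blast
    have "norm (z *\<^sub>R h) \<le> norm h" using z by (simp add: mult_left_le_one_le)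
    then show ?thesis using M0 by (intro mult_right_mono mult_left_mono) auto
  qed
  also have "\<dots> = M * (norm h)^2" by (simp add: power2_eq_square)
  finally show ?thesis using z(3) by simp
qed

lemma taylor2:
  fixes p :: "'a::euclidean_space \<Rightarrow> real"
  assumes D1: "\<forall>x. (p has_derivative blinfun_apply (D1 x)) (at x)"
    and D2: "\<forall>x. (D1 has_derivative blinfun_apply (D2 x)) (at x)"
    and e: "e > 0"
  shows "\<exists>d>0. \<forall>y. norm y < d \<longrightarrow>
     \<bar>p (m + y) - p m - D1 m y - D2 m y y / 2\<bar> \<le> e * (norm y)^2"
proof -
  from D2[rule_format, of m] e obtain d where d: "d > 0"
    "\<forall>y. norm (y - m) < d \<longrightarrow> norm (D1 y - D1 m - D2 m (y - m)) \<le> e * norm (y - m)"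
    unfolding has_derivative_at_alt by blast
  show ?thesis
  proof (intro exI conjI allI impI)
    fix y :: 'a assume y: "norm y < d"
    define g where "g t = p (m + t *\<^sub>R y) - t * D1 m y - t^2/2 * D2 m y y" for t
    have dg: "(g has_real_derivative (D1 (m + t *\<^sub>R y) y - D1 m y - t * D2 m y y)) (at t)" for t
      unfolding g_def
      by (auto intro!: derivative_eq_intros line_deriv[OF D1])
    from MVT2[OF zero_less_one, of g, OF dg] obtain z where z: "0 < z" "z < 1"
      "g 1 - g 0 = (1 - 0) * (D1 (m + z *\<^sub>R y) y - D1 m y - z * D2 m y y)" by blast
    have nz: "norm (z *\<^sub>R y) \<le> norm y" using z by (simp add: mult_left_le_one_le)
    have "D1 (m + z *\<^sub>R y) y - D1 m y - z * D2 m y y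
        = (D1 (m + z *\<^sub>R y) - D1 m - D2 m (z *\<^sub>R y)) y"
      by (simp add: blinfun.diff_left blinfun.scaleR_right blinfun.scaleR_left)
    then have "\<bar>D1 (m + z *\<^sub>R y) y - D1 m y - z * D2 m y y\<bar>
        \<le> norm (D1 (m + z *\<^sub>R y) - D1 m - D2 m (z *\<^sub>R y)) * norm y"
      using norm_blinfun by (metis real_norm_def)
    also have "\<dots> \<le> (e * norm (z *\<^sub>R y)) * norm y"
      using d(2)[rule_format, of "m + z *\<^sub>R y"] nz y
      by (intro mult_right_mono) auto
    also have "\<dots> \<le> e * norm y * norm y"
      using nz e by (intro mult_right_mono mult_left_mono) auto
    also have "\<dots> = e * (norm y)^2" by (simp add: power2_eq_square)
    finally show "\<bar>p (m + y) - p m - D1 m y - D2 m y y / 2\<bar> \<le> e * (norm y)^2"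
      using z(3) by (simp add: g_def)
  qed (use d in auto)
qed

lemma D2_delta:
  fixes p :: "'a::euclidean_space \<Rightarrow> real"
  assumes D1: "\<forall>x. (p has_derivative blinfun_apply (D1 x)) (at x)"
    and D2: "\<forall>x. (D1 has_derivative blinfun_apply (D2 x)) (at x)"
    and cont: "continuous_on UNIV D2"
    and e: "e > 0"
  shows "\<exists>d>0. \<forall>s. 0 < s \<and> s < d \<longrightarrow>
     \<bar>(p (m + s *\<^sub>R v + s *\<^sub>R w) - p (m + s *\<^sub>R w) - p (m + s *\<^sub>R v) + p m) - s^2 * D2 m v w\<bar> \<le> s^2 * e"
proof -
  define e' where "e' = e / (norm v * norm w + 1)"
  have e': "e' > 0" using e by (simp add: e'_def add_nonneg_pos)
  have "isCont D2 m" using cont by (simp add: continuous_on_eq_continuous_at)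
  then obtain d where d: "d > 0" "\<forall>y. dist y m < d \<longrightarrow> dist (D2 y) (D2 m) < e'"
    using e' unfolding continuous_at_eps_delta by blast
  define d' where "d' = d / (norm v + norm w + 1)"
  have d': "d' > 0" using d by (simp add: d'_def add_nonneg_pos)
  show ?thesis
  proof (intro exI conjI allI impI)
    fix s :: real assume s: "0 < s \<and> s < d'"
    define h where "h t = p ((m + s *\<^sub>R v) + t *\<^sub>R w) - p (m + t *\<^sub>R w)" for t
    have dh: "(h has_real_derivative (D1 ((m + s *\<^sub>R v) + t *\<^sub>R w) w - D1 (m + t *\<^sub>R w) w)) (at t)" for t
      unfolding h_def by (auto intro!: derivative_eq_intros line_deriv[OF D1])
    from MVT2[of 0 s h, OF _ dh] s obtain xi where xi: "0 < xi" "xi < s"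
      "h s - h 0 = (s - 0) * (D1 ((m + s *\<^sub>R v) + xi *\<^sub>R w) w - D1 (m + xi *\<^sub>R w) w)" by auto
    define k where "k u = D1 ((m + xi *\<^sub>R w) + u *\<^sub>R v) w" for u
    have dk: "(k has_real_derivative (D2 ((m + xi *\<^sub>R w) + u *\<^sub>R v) v w)) (at u)" for u
      unfolding k_def by (rule line_deriv1[OF D2])
    from MVT2[of 0 s k, OF _ dk] s obtain eta where eta: "0 < eta" "eta < s"
      "k s - k 0 = (s - 0) * D2 ((m + xi *\<^sub>R w) + eta *\<^sub>R v) v w" by auto
    define y where "y = (m + xi *\<^sub>R w) + eta *\<^sub>R v"
    have eqk: "k s = D1 ((m + s *\<^sub>R v) + xi *\<^sub>R w) w" "k 0 = D1 (m + xi *\<^sub>R w) w"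
      unfolding k_def by (simp_all add: algebra_simps)
    have Delta: "p (m + s *\<^sub>R v + s *\<^sub>R w) - p (m + s *\<^sub>R w) - p (m + s *\<^sub>R v) + p m = s^2 * D2 y v w"
      using xi(3) eta(3) eqk unfolding h_def y_def by (simp add: power2_eq_square)
    have "y - m = xi *\<^sub>R w + eta *\<^sub>R v" unfolding y_def by simp
    then have "norm (y - m) \<le> norm (xi *\<^sub>R w) + norm (eta *\<^sub>R v)"
      using norm_triangle_ineq[of "xi *\<^sub>R w" "eta *\<^sub>R v"] by (simp del: norm_scaleR)
    also have "\<dots> = xi * norm w + eta * norm v" using xi eta by simp
    finally have "norm (y - m) \<le> xi * norm w + eta * norm v" .
    also have "\<dots> \<le> s * norm w + s * norm v"
      using xi eta by (intro add_mono mult_right_mono) auto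
    also have "\<dots> < d"
    proof -
      have pos: "norm v + norm w + 1 > 0" by (simp add: add_nonneg_pos)
      have "s * (norm v + norm w + 1) < d' * (norm v + norm w + 1)"
        using s pos by (intro mult_strict_right_mono) auto
      also have "d' * (norm v + norm w + 1) = d" unfolding d'_def using pos by simp
      finally have "s * norm v + s * norm w + s < d" by (simp add: algebra_simps)
      then show ?thesis using s by linarith
    qed
    finally have "dist y m < d" by (simp add: dist_norm)
    then have ny: "norm (D2 y - D2 m) < e'" using d(2) by (simp add: dist_norm)
    have "\<bar>D2 y v w - D2 m v w\<bar> = norm ((D2 y - D2 m) v w)"
      by (simp add: blinfun.diff_left)
    also have "\<dots> \<le> norm ((D2 y - D2 m) v) * norm w" by (rule norm_blinfun)
    also have "\<dots> \<le> (norm (D2 y - D2 m) * norm v) * norm w"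
      by (intro mult_right_mono norm_blinfun) auto
    also have "\<dots> \<le> e' * (norm v * norm w)"
      using ny by (simp add: mult.assoc mult_right_mono)
    also have "\<dots> \<le> e"
    proof -
      have "e' * (norm v * norm w) \<le> e' * (norm v * norm w + 1)" using e' by simp
      also have "\<dots> = e" unfolding e'_def
        using add_nonneg_pos[of "norm v * norm w" 1] by simp
      finally show ?thesis .
    qed
    finally have "\<bar>D2 y v w - D2 m v w\<bar> \<le> e" .
    then have "s^2 * \<bar>D2 y v w - D2 m v w\<bar> \<le> s^2 * e" by (simp add: mult_left_mono)
    then show "\<bar>(p (m + s *\<^sub>R v + s *\<^sub>R w) - p (m + s *\<^sub>R w) - p (m + s *\<^sub>R v) + p m) - s^2 * D2 m v w\<bar> \<le> s^2 * e"
      unfolding Delta by (simp add: abs_mult right_diff_distrib[symmetric])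
  qed (use d' in auto)
qed

lemma D2_sym:
  fixes p :: "'a::euclidean_space \<Rightarrow> real"
  assumes D1: "\<forall>x. (p has_derivative blinfun_apply (D1 x)) (at x)"
    and D2: "\<forall>x. (D1 has_derivative blinfun_apply (D2 x)) (at x)"
    and cont: "continuous_on UNIV D2"
  shows "D2 m v w = D2 m w v"
proof (rule ccontr)
  assume ne: "D2 m v w \<noteq> D2 m w v"
  define e where "e = \<bar>D2 m v w - D2 m w v\<bar> / 4"
  have e: "e > 0" using ne by (simp add: e_def)
  obtain d1 where d1: "d1 > 0" "\<forall>s. 0 < s \<and> s < d1 \<longrightarrow>
     \<bar>(p (m + s *\<^sub>R v + s *\<^sub>R w) - p (m + s *\<^sub>R w) - p (m + s *\<^sub>R v) + p m) - s^2 * D2 m v w\<bar> \<le> s^2 * e"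
    using D2_delta[OF D1 D2 cont e] by blast
  obtain d2 where d2: "d2 > 0" "\<forall>s. 0 < s \<and> s < d2 \<longrightarrow>
     \<bar>(p (m + s *\<^sub>R w + s *\<^sub>R v) - p (m + s *\<^sub>R v) - p (m + s *\<^sub>R w) + p m) - s^2 * D2 m w v\<bar> \<le> s^2 * e"
    using D2_delta[OF D1 D2 cont e] by blast
  define s where "s = min d1 d2 / 2"
  have s: "0 < s" "s < d1" "s < d2" using d1 d2 by (auto simp: s_def)
  have eq: "m + s *\<^sub>R w + s *\<^sub>R v = m + s *\<^sub>R v + s *\<^sub>R w" by (simp add: algebra_simps)
  have "\<bar>s^2 * D2 m v w - s^2 * D2 m w v\<bar> \<le> 2 * (s^2 * e)"
    using d1(2)[rule_format, of s] d2(2)[rule_format, of s] s eq by auto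
  then have "s^2 * \<bar>D2 m v w - D2 m w v\<bar> \<le> s^2 * (2 * e)"
    by (simp add: abs_mult right_diff_distrib[symmetric])
  then have "\<bar>D2 m v w - D2 m w v\<bar> \<le> 2 * e" using s by simp
  then show False using e unfolding e_def by simp
qed

lemma sphere_nonempty: "sphere (0::'a::euclidean_space) 1 \<noteq> {}"
proof -
  obtain b :: 'a where "b \<in> Basis" using nonempty_Basis by blast
  then have "b \<in> sphere 0 1" by simp
  then show ?thesis by blast
qed

lemma nondeg_bound:
  fixes B :: "'a::euclidean_space \<Rightarrow>\<^sub>L ('a \<Rightarrow>\<^sub>L real)"
  assumes nd: "\<forall>h. B h = 0 \<longrightarrow> h = 0"
  shows "\<exists>k>0. \<forall>h. norm (B h) \<ge> k * norm h"
proof -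
  have "continuous_on (sphere 0 1) (\<lambda>h. norm (B h))"
    by (intro continuous_intros)
  from continuous_attains_inf[OF compact_sphere sphere_nonempty this]
  obtain h0 :: 'a where h0: "h0 \<in> sphere 0 1" "\<forall>y\<in>sphere 0 1. norm (B h0) \<le> norm (B y)"
    by blast
  have pos: "norm (B h0) > 0" using nd h0(1) by auto
  show ?thesis
  proof (intro exI conjI allI)
    fix h :: 'a
    show "norm (B h0) * norm h \<le> norm (B h)"
    proof (cases "h = 0")
      case False
      let ?u = "(1 / norm h) *\<^sub>R h"
      have "?u \<in> sphere 0 1" using False by simp
      then have "norm (B h0) \<le> norm (B ?u)" using h0 by blast
      also have "\<dots> = norm (B h) / norm h" by (simp add: blinfun.scaleR_right)
      finally show ?thesis using False by (simp add: field_simps)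
    qed simp
  qed (rule pos)
qed

lemma grad_near_crit:
  fixes D1 :: "'a::euclidean_space \<Rightarrow> ('a \<Rightarrow>\<^sub>L real)"
  assumes D2: "\<forall>x. (D1 has_derivative blinfun_apply (D2 x)) (at x)"
    and crit: "D1 m = 0" and nd: "\<forall>h. D2 m h = 0 \<longrightarrow> h = 0"
  shows "\<exists>l>0. \<exists>d>0. \<forall>x. norm (x - m) < d \<longrightarrow> norm (D1 x) \<ge> l * norm (x - m)"
proof -
  obtain k where k: "k > 0" "\<forall>h. norm (D2 m h) \<ge> k * norm h"
    using nondeg_bound[OF nd] by blast
  from D2[rule_format, of m] k(1) obtain d where d: "d > 0"
    "\<forall>y. norm (y - m) < d \<longrightarrow> norm (D1 y - D1 m - D2 m (y - m)) \<le> (k/2) * norm (y - m)"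
    unfolding has_derivative_at_alt by (meson half_gt_zero)
  show ?thesis
  proof (intro exI conjI allI impI)
    fix x assume x: "norm (x - m) < d"
    have "k * norm (x - m) \<le> norm (D2 m (x - m))" using k by blast
    also have "\<dots> \<le> norm (D1 x) + norm (D1 x - D1 m - D2 m (x - m))"
      using crit norm_triangle_ineq4[of "D1 x" "D1 x - D2 m (x - m)"] by simp
    finally show "(k/2) * norm (x - m) \<le> norm (D1 x)" using d(2) x by force
  qed (use k d in auto)
qed

lemma pos_dir:
  fixes p :: "'a::euclidean_space \<Rightarrow> real"
  assumes D1: "\<forall>x. (p has_derivative blinfun_apply (D1 x)) (at x)"
    and D2: "\<forall>x. (D1 has_derivative blinfun_apply (D2 x)) (at x)"
    and cont: "continuous_on UNIV D2"
    and crit: "D1 m = 0" and nd: "\<forall>h. D2 m h = 0 \<longrightarrow> h = 0"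
    and notmax: "\<not> strict_local_max p m"
  shows "\<exists>v. D2 m v v > 0"
proof (rule ccontr)
  assume "\<not> (\<exists>v. D2 m v v > 0)"
  then have Q: "\<forall>v. D2 m v v \<le> 0" by (simp add: not_less)
  have "continuous_on (sphere 0 1) (\<lambda>v. D2 m v v)"
    by (intro continuous_intros)
  from continuous_attains_sup[OF compact_sphere sphere_nonempty this]
  obtain v0 :: 'a where v0: "v0 \<in> sphere 0 1" "\<forall>y\<in>sphere 0 1. D2 m y y \<le> D2 m v0 v0"
    by blast
  show False
  proof (cases "D2 m v0 v0 = 0")
    case True
    have "D2 m v0 w = 0" for w
    proof (rule ccontr)
      define b where "b = D2 m v0 w"
      define q where "q = - D2 m w w"
      assume "D2 m v0 w \<noteq> 0"
      then have b: "b \<noteq> 0" by (simp add: b_def)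
      have q: "q \<ge> 0" using Q by (simp add: q_def)
      define t where "t = b / (q + 1)"
      have "D2 m (v0 + t *\<^sub>R w) (v0 + t *\<^sub>R w)
          = D2 m v0 v0 + t * D2 m v0 w + t * D2 m w v0 + t * t * D2 m w w"
        by (simp add: blinfun.add_left blinfun.add_right blinfun.scaleR_left blinfun.scaleR_right algebra_simps)
      also have "\<dots> = 2 * (t * b) - t * t * q"
        using True D2_sym[OF D1 D2 cont, of m w v0] by (simp add: b_def q_def)
      finally have eq: "D2 m (v0 + t *\<^sub>R w) (v0 + t *\<^sub>R w) = 2 * (t * b) - t * t * q" .
      have tb: "t * b > 0"
      proof -
        have "b * b > 0" using b by (auto simp: zero_less_mult_iff linorder_neq_iff)
        moreover have "q + 1 > 0" using q by simp
        ultimately show ?thesis by (simp add: t_def)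
      qed
      have "t * t * q = (t * b) * (q / (q + 1))" by (simp add: t_def)
      also have "\<dots> \<le> t * b"
      proof (rule mult_left_le)
        show "q / (q + 1) \<le> 1" using q by simp
      qed (use tb in simp)
      finally have "D2 m (v0 + t *\<^sub>R w) (v0 + t *\<^sub>R w) > 0" using eq tb by linarith
      then show False using Q by (meson not_less)
    qed
    then have "D2 m v0 = 0" by (intro blinfun_eqI) simp
    then have "v0 = 0" using nd by blast
    then show False using v0(1) by simp
  next
    case False
    define mu where "mu = - D2 m v0 v0"
    have mu: "mu > 0" using False Q[rule_format, of v0] by (simp add: mu_def)
    have Qb: "D2 m v v \<le> - mu * (norm v)^2" for v
    proof (cases "v = 0")
      case False
      let ?u = "(1 / norm v) *\<^sub>R v"
      have "?u \<in> sphere 0 1" using False by simp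
      then have "D2 m ?u ?u \<le> - mu" using v0 by (simp add: mu_def)
      moreover have "D2 m ?u ?u = D2 m v v / (norm v)^2"
        by (simp add: blinfun.scaleR_left blinfun.scaleR_right power2_eq_square)
      ultimately have "D2 m v v / (norm v)^2 \<le> - mu" by simp
      then show ?thesis using False by (simp add: field_simps)
    qed simp
    have mu4: "mu / 4 > 0" using mu by simp
    obtain d where d: "d > 0" "\<forall>y. norm y < d \<longrightarrow>
       \<bar>p (m + y) - p m - D1 m y - D2 m y y / 2\<bar> \<le> mu / 4 * (norm y)^2"
      using taylor2[OF D1 D2 mu4] by blast
    have "strict_local_max p m"
      unfolding strict_local_max_def
    proof (intro exI conjI ballI impI)
      fix y assume y: "y \<in> ball m d" "y \<noteq> m"
      define h where "h = y - m"
      have h: "norm h < d" "h \<noteq> 0" using y by (auto simp: h_def dist_norm norm_minus_commute)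
      have y': "y = m + h" by (simp add: h_def)
      have A: "\<bar>p (m + h) - p m - D1 m h - D2 m h h / 2\<bar> \<le> mu / 4 * (norm h)^2"
        using d(2) h(1) by blast
      have A2: "p (m + h) - p m - D1 m h - D2 m h h / 2 \<le> mu / 4 * (norm h)^2"
        using abs_le_D1[OF A] .
      have "D1 m h = 0" using crit by simp
      then have "p (m + h) \<le> p m + D2 m h h / 2 + mu / 4 * (norm h)^2"
        using A2 by linarith
      also have "\<dots> \<le> p m - mu / 4 * (norm h)^2"
        using Qb[of h] by simp
      also have "\<dots> < p m" using h mu by simp
      finally show "p y < p m" using y' by simp
    qed (rule d(1))
    then show False using notmax by simp
  qed
qed

lemma bil_bound:
  fixes B :: "'a::real_normed_vector \<Rightarrow>\<^sub>L ('a \<Rightarrow>\<^sub>L real)"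
  shows "\<bar>B a b\<bar> \<le> norm B * norm a * norm b"
proof -
  have "\<bar>B a b\<bar> = norm (B a b)" by simp
  also have "\<dots> \<le> norm (B a) * norm b" by (rule norm_blinfun)
  also have "\<dots> \<le> norm B * norm a * norm b" by (intro mult_right_mono norm_blinfun) auto
  finally show ?thesis .
qed

lemma saddle_arith:
  fixes mu Bn K L :: real
  assumes mu: "mu > 0" and Bn: "Bn \<ge> 0" and K: "K > 0"
    and L: "L = K + 3 + 4 * (4 * Bn + Bn * K^2) / mu"
  shows "(L^2 * mu - 4 * L * Bn - 4 * Bn) / 2 - mu / 32 * (L + 2)^2 - (Bn / 2 + mu / 32) * K^2 > 0"
proof -
  define W where "W = 4 * Bn + Bn * K^2"
  have W: "W \<ge> 0" using Bn by (simp add: W_def)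
  have L2: "L \<ge> 2" "L \<ge> K" "L \<ge> 1" using L W mu K by (simp_all add: W_def)
  have LW: "L * mu > 4 * W"
  proof -
    have "L \<ge> 1 + 4 * W / mu" using L K by (simp add: W_def)
    then have "L * mu \<ge> (1 + 4 * W / mu) * mu" using mu by (intro mult_right_mono) auto
    also have "(1 + 4 * W / mu) * mu = mu + 4 * W" using mu by (simp add: field_simps)
    finally show ?thesis using mu by linarith
  qed
  have a: "(L + 2)^2 \<le> 4 * L^2"
  proof -
    have "L + 2 \<le> 2 * L" using L2 by simp
    then have "(L + 2)^2 \<le> (2 * L)^2" using L2 by (intro power_mono) auto
    then show ?thesis by (simp add: power_mult_distrib)
  qed
  have b: "K^2 \<le> L^2" using L2 K by (intro power_mono) auto
  have c: "2 * (L * Bn) + 2 * Bn + Bn * K^2 / 2 \<le> L * W"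
  proof -
    have c1: "1 * Bn \<le> L * Bn" using L2 Bn by (intro mult_right_mono) auto
    have c2: "1 * (Bn * K^2) \<le> L * (Bn * K^2)" using L2 Bn by (intro mult_right_mono) auto
    have c3: "Bn * K^2 \<ge> 0" using Bn by simp
    have "L * W = 4 * (L * Bn) + L * (Bn * K^2)" unfolding W_def by (simp add: algebra_simps)
    then show ?thesis using c1 c2 c3 by linarith
  qed
  have d: "L * W < L^2 * mu / 4"
  proof -
    have "L * (4 * W) < L * (L * mu)" using LW L2 by (intro mult_strict_left_mono) auto
    then show ?thesis by (simp add: power2_eq_square algebra_simps)
  qed
  have e1: "mu * (L + 2)^2 \<le> 4 * (mu * L^2)"
    using mult_left_mono[OF a, of mu] mu by (simp add: algebra_simps)
  have e2: "mu * K^2 \<le> mu * L^2" using b mu by (intro mult_left_mono) auto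
  have d2: "4 * (L * W) < mu * L^2" using d by (simp add: algebra_simps)
  have eq: "(L^2 * mu - 4 * L * Bn - 4 * Bn) / 2 - mu / 32 * (L + 2)^2 - (Bn / 2 + mu / 32) * K^2
     = (mu * L^2) / 2 - 2 * (L * Bn) - 2 * Bn - (mu * (L + 2)^2) / 32 - (Bn * K^2) / 2 - (mu * K^2) / 32"
    by (simp add: field_simps)
  have f: "mu * L^2 \<ge> 0" using mu by simp
  show ?thesis unfolding eq using c d2 e1 e2 f by linarith
qed

lemma saddle:
  fixes p :: "'a::euclidean_space \<Rightarrow> real"
  assumes D1: "\<forall>x. (p has_derivative blinfun_apply (D1 x)) (at x)"
    and D2: "\<forall>x. (D1 has_derivative blinfun_apply (D2 x)) (at x)"
    and cont: "continuous_on UNIV D2"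
    and crit: "D1 m = 0" and nd: "\<forall>h. D2 m h = 0 \<longrightarrow> h = 0"
    and notmax: "\<not> strict_local_max p m"
    and K: "K > 0"
  shows "\<exists>L>0. \<exists>e0>0. \<forall>eps. 0 < eps \<and> eps < e0 \<longrightarrow> (\<forall>x. norm (x - m) \<le> K * eps \<longrightarrow>
     (\<exists>c. (\<forall>z\<in>cball c (2 * eps). dist z x \<le> L * eps) \<and> x \<notin> cball c (2 * eps) \<and>
          (\<forall>z\<in>cball c (2 * eps). p z > p x)))"
proof -
  obtain v where v: "D2 m v v > 0" using pos_dir[OF D1 D2 cont crit nd notmax] by blast
  then have v0: "v \<noteq> 0" by auto
  define u where "u = (1 / norm v) *\<^sub>R v"
  have nu: "norm u = 1" using v0 by (simp add: u_def)
  define mu where "mu = D2 m u u"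
  have mu: "mu > 0" using v v0
    by (simp add: mu_def u_def blinfun.scaleR_left blinfun.scaleR_right)
  define Bn where "Bn = norm (D2 m)"
  have Bn: "Bn \<ge> 0" by (simp add: Bn_def)
  define L where "L = K + 3 + 4 * (4 * Bn + Bn * K^2) / mu"
  have L2: "L \<ge> K + 3" using Bn mu K by (simp add: L_def)
  define G where "G = (L^2 * mu - 4 * L * Bn - 4 * Bn) / 2 - mu / 32 * (L + 2)^2 - (Bn / 2 + mu / 32) * K^2"
  have G: "G > 0" unfolding G_def using saddle_arith[OF mu Bn K L_def] .
  have mu32: "mu / 32 > 0" using mu by simp
  obtain d where d: "d > 0" "\<forall>y. norm y < d \<longrightarrow>
       \<bar>p (m + y) - p m - D1 m y - D2 m y y / 2\<bar> \<le> mu / 32 * (norm y)^2"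
    using taylor2[OF D1 D2 mu32] by blast
  have T: "\<bar>p (m + y) - p m - D2 m y y / 2\<bar> \<le> mu / 32 * (norm y)^2" if "norm y < d" for y
    using d(2) that crit by simp
  have pos: "L + K + 2 > 0" "d / (L + 2) > 0" using L2 K d by simp_all
  have main: "\<forall>eps. 0 < eps \<and> eps < d / (L + 2) \<longrightarrow> (\<forall>x. norm (x - m) \<le> K * eps \<longrightarrow>
     (\<exists>c. (\<forall>z\<in>cball c (2 * eps). dist z x \<le> (L + K + 2) * eps) \<and> x \<notin> cball c (2 * eps) \<and>
          (\<forall>z\<in>cball c (2 * eps). p z > p x)))"
  proof (intro allI impI)
    fix eps x assume eps: "0 < eps \<and> eps < d / (L + 2)" and x: "norm (x - m) \<le> K * eps"
    have Le: "(L + 2) * eps < d" using eps L2 K by (simp add: field_simps)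
    define c where "c = m + (L * eps) *\<^sub>R u"
    define E where "E = eps^2"
    have E: "E > 0" using eps by (simp add: E_def)
    have "K * eps < (L + 2) * eps" using eps L2 by (intro mult_strict_right_mono) auto
    then have xd: "norm (x - m) < d" using x Le by linarith
    have px: "p x \<le> p m + D2 m (x - m) (x - m) / 2 + mu / 32 * (norm (x - m))^2"
    proof -
      have "\<bar>p x - p m - D2 m (x - m) (x - m) / 2\<bar> \<le> mu / 32 * (norm (x - m))^2"
        using T[OF xd] by simp
      from abs_le_D1[OF this] show ?thesis by linarith
    qed
    have nx2: "(norm (x - m))^2 \<le> E * K^2"
    proof -
      have "(norm (x - m))^2 \<le> (K * eps)^2" using x by (intro power_mono) auto
      then show ?thesis by (simp add: E_def power_mult_distrib mult.commute)
    qed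
    have Qx: "D2 m (x - m) (x - m) \<le> Bn * (norm (x - m))^2"
      using bil_bound[of "D2 m" "x - m" "x - m"] by (simp add: Bn_def power2_eq_square mult.assoc)
    have px2: "p x \<le> p m + (Bn / 2 + mu / 32) * (E * K^2)"
    proof -
      have "Bn * (norm (x - m))^2 \<le> Bn * (E * K^2)" using nx2 Bn by (intro mult_left_mono)
      moreover have "mu / 32 * (norm (x - m))^2 \<le> mu / 32 * (E * K^2)" using nx2 mu by (intro mult_left_mono) auto
      ultimately show ?thesis using px Qx by (simp add: algebra_simps)
    qed
    show "\<exists>c. (\<forall>z\<in>cball c (2 * eps). dist z x \<le> (L + K + 2) * eps) \<and> x \<notin> cball c (2 * eps) \<and>
          (\<forall>z\<in>cball c (2 * eps). p z > p x)"
    proof (intro exI[of _ c] conjI ballI)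
      fix z assume z: "z \<in> cball c (2 * eps)"
      have ze: "norm (z - c) \<le> 2 * eps" using z by (simp add: dist_norm norm_minus_commute)
      have "z - x = (z - c) + (c - m) + (m - x)" by simp
      then have "norm (z - x) \<le> norm ((z - c) + (c - m)) + norm (m - x)"
        using norm_triangle_ineq by metis
      also have "\<dots> \<le> norm (z - c) + norm (c - m) + norm (m - x)"
        using norm_triangle_ineq[of "z - c" "c - m"] by simp
      finally have "dist z x \<le> norm (z - c) + norm (c - m) + norm (m - x)" by (simp add: dist_norm)
      also have "\<dots> \<le> 2 * eps + L * eps + K * eps"
        using ze x nu eps L2 K by (simp add: c_def norm_minus_commute)
      finally show "dist z x \<le> (L + K + 2) * eps" by (simp add: algebra_simps)
    next
      show "x \<notin> cball c (2 * eps)"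
      proof
        assume "x \<in> cball c (2 * eps)"
        then have a: "norm (c - x) \<le> 2 * eps" by (simp add: dist_norm)
        have "L * eps = norm (c - m)" using nu eps L2 K by (simp add: c_def)
        also have "\<dots> \<le> norm (c - x) + norm (x - m)"
          using norm_triangle_ineq[of "c - x" "x - m"] by simp
        finally have "L * eps \<le> 2 * eps + K * eps" using a x by linarith
        then have "L * eps \<le> (2 + K) * eps" by (simp add: algebra_simps)
        then have "L \<le> 2 + K" using eps by (simp add: mult_le_cancel_right)
        then show False using L2 by simp
      qed
    next
      fix z assume z: "z \<in> cball c (2 * eps)"
      define e where "e = z - c"
      have ze: "norm e \<le> 2 * eps" using z by (simp add: e_def dist_norm norm_minus_commute)
      define y where "y = (L * eps) *\<^sub>R u + e"
      have zy: "z = m + y" by (simp add: y_def e_def c_def)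
      have ny: "norm y \<le> (L + 2) * eps"
      proof -
        have "norm y \<le> norm ((L * eps) *\<^sub>R u) + norm e" unfolding y_def by (rule norm_triangle_ineq)
        also have "\<dots> \<le> L * eps + 2 * eps" using nu ze eps L2 K by simp
        finally show ?thesis by (simp add: algebra_simps)
      qed
      have yd: "norm y < d" using ny Le by linarith
      have ny2: "(norm y)^2 \<le> E * (L + 2)^2"
      proof -
        have "(norm y)^2 \<le> ((L + 2) * eps)^2" using ny by (intro power_mono) auto
        then show ?thesis by (simp add: E_def power_mult_distrib mult.commute)
      qed
      define s where "s = L * eps"
      have s: "s \<ge> 0" using eps L2 K by (simp add: s_def)
      have Qy: "D2 m y y = s^2 * mu + s * (D2 m u e + D2 m e u) + D2 m e e"
        by (simp add: y_def s_def mu_def blinfun.add_left blinfun.add_right blinfun.scaleR_left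
            blinfun.scaleR_right power2_eq_square algebra_simps)
      have b1: "\<bar>D2 m u e\<bar> \<le> Bn * (2 * eps)"
        using bil_bound[of "D2 m" u e] nu mult_left_mono[OF ze Bn] by (simp add: Bn_def)
      have b2: "\<bar>D2 m e u\<bar> \<le> Bn * (2 * eps)"
        using bil_bound[of "D2 m" e u] nu mult_left_mono[OF ze Bn] by (simp add: Bn_def)
      have b3: "\<bar>D2 m e e\<bar> \<le> Bn * (4 * E)"
      proof -
        have "(norm e)^2 \<le> (2 * eps)^2" using ze by (intro power_mono) auto
        then have "norm e * norm e \<le> 4 * E" by (simp add: E_def power2_eq_square)
        then have "Bn * (norm e * norm e) \<le> Bn * (4 * E)" using Bn by (intro mult_left_mono)
        then show ?thesis using bil_bound[of "D2 m" e e] by (simp add: Bn_def mult.assoc)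
      qed
      have "s * (D2 m u e + D2 m e u) \<ge> - (s * (Bn * (4 * eps)))"
      proof -
        have "D2 m u e + D2 m e u \<ge> - (Bn * (4 * eps))" using b1 b2 by (simp add: abs_le_iff)
        from mult_left_mono[OF this s] show ?thesis by simp
      qed
      then have Qy2: "D2 m y y \<ge> E * (L^2 * mu - 4 * L * Bn - 4 * Bn)"
        using Qy b3 unfolding s_def E_def by (simp add: abs_le_iff power2_eq_square algebra_simps)
      have pz: "p z \<ge> p m + D2 m y y / 2 - mu / 32 * (norm y)^2"
      proof -
        have "\<bar>p z - p m - D2 m y y / 2\<bar> \<le> mu / 32 * (norm y)^2"
          using T[OF yd] zy by simp
        from abs_le_D2[OF this] show ?thesis by linarith
      qed
      have "mu / 32 * (norm y)^2 \<le> mu / 32 * (E * (L + 2)^2)" using ny2 mu by (intro mult_left_mono) auto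
      then have "p z \<ge> p m + E * (L^2 * mu - 4 * L * Bn - 4 * Bn) / 2 - mu / 32 * (E * (L + 2)^2)"
        using pz Qy2 by linarith
      moreover have "E * G > 0" using E G by simp
      moreover have "E * G = E * (L^2 * mu - 4 * L * Bn - 4 * Bn) / 2 - mu / 32 * (E * (L + 2)^2)
          - (Bn / 2 + mu / 32) * (E * K^2)" by (simp add: G_def algebra_simps)
      ultimately show "p z > p x" using px2 by linarith
    qed
  qed
  show ?thesis using pos main by blast
qed

lemma good_dir:
  fixes g :: "'a::euclidean_space \<Rightarrow>\<^sub>L real"
  shows "\<exists>u. norm u = 1 \<and> g u \<ge> norm g / real DIM('a)"
proof -
  have dpos: "real DIM('a) > 0" by simp
  have "\<exists>b\<in>Basis. \<bar>g b\<bar> \<ge> norm g / real DIM('a)"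
  proof (rule ccontr)
    assume "\<not> ?thesis"
    then have "\<And>b. b \<in> Basis \<Longrightarrow> norm (g b) < norm g / real DIM('a)" by force
    then have "sum (\<lambda>b. norm (g b)) Basis < real (card (Basis::'a set)) * (norm g / real DIM('a))"
      by (intro sum_bounded_above_strict) auto
    also have "\<dots> = norm g" using dpos by simp
    finally show False using norm_blinfun_euclidean_le[of g] by simp
  qed
  then obtain b :: 'a where b: "b \<in> Basis" "\<bar>g b\<bar> \<ge> norm g / real DIM('a)" by blast
  show ?thesis
  proof (cases "g b \<ge> 0")
    case True
    then show ?thesis using b by (intro exI[of _ b]) auto
  next
    case False
    then show ?thesis using b by (intro exI[of _ "- b"]) (auto simp: blinfun.minus_right)
  qed
qed

lemma grad_step:
  fixes p :: "'a::euclidean_space \<Rightarrow> real"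
  assumes D1: "\<forall>x. (p has_derivative blinfun_apply (D1 x)) (at x)"
    and D2: "\<forall>x. (D1 has_derivative blinfun_apply (D2 x)) (at x)"
    and M: "\<forall>x. norm (D2 x) \<le> M"
    and eps: "eps > 0"
    and big: "norm (D1 x) > M * (3 * real DIM('a) + 2)^2 * eps"
  shows "\<exists>c. (\<forall>z\<in>cball c (2 * eps). dist z x \<le> (3 * real DIM('a) + 2) * eps) \<and>
             x \<notin> cball c (2 * eps) \<and> (\<forall>z\<in>cball c (2 * eps). p z > p x)"
proof -
  define dd where "dd = real DIM('a)"
  have dd: "dd \<ge> 1" by (simp add: dd_def)
  define n where "n = norm (D1 x)"
  obtain u where u: "norm u = 1" "D1 x u \<ge> n / dd" using good_dir[of "D1 x"] by (auto simp: n_def dd_def)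
  define s where "s = 3 * dd"
  define c where "c = x + (s * eps) *\<^sub>R u"
  have M0: "M \<ge> 0" using M norm_ge_zero order_trans by blast
  show ?thesis
  proof (intro exI[of _ c] conjI ballI)
    fix z assume z: "z \<in> cball c (2 * eps)"
    have "norm (z - x) \<le> norm (z - c) + norm (c - x)"
      using norm_triangle_ineq[of "z - c" "c - x"] by simp
    also have "\<dots> \<le> 2 * eps + s * eps"
      using z u eps dd by (simp add: c_def dist_norm norm_minus_commute s_def)
    finally show "dist z x \<le> (3 * real DIM('a) + 2) * eps"
      by (simp add: dist_norm s_def dd_def algebra_simps)
  next
    show "x \<notin> cball c (2 * eps)"
      using u eps dd by (simp add: c_def dist_norm s_def)
  next
    fix z assume z: "z \<in> cball c (2 * eps)"
    define e where "e = z - c"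
    have ze: "norm e \<le> 2 * eps" using z by (simp add: e_def dist_norm norm_minus_commute)
    define h where "h = (s * eps) *\<^sub>R u + e"
    have zh: "z = x + h" by (simp add: h_def e_def c_def)
    have nh: "norm h \<le> (s + 2) * eps"
    proof -
      have "norm h \<le> norm ((s * eps) *\<^sub>R u) + norm e" unfolding h_def by (rule norm_triangle_ineq)
      also have "\<dots> \<le> s * eps + 2 * eps" using u ze eps dd by (simp add: s_def)
      finally show ?thesis by (simp add: algebra_simps)
    qed
    have "\<bar>D1 x e\<bar> \<le> n * norm e" using norm_blinfun[of "D1 x" e] by (simp add: n_def)
    also have "\<dots> \<le> n * (2 * eps)" using ze by (intro mult_left_mono) (auto simp: n_def)
    finally have ge: "D1 x e \<ge> - (n * (2 * eps))" by simp
    have "(s * eps) * (n / dd) \<le> (s * eps) * D1 x u"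
      using u eps dd by (intro mult_left_mono) (auto simp: s_def)
    moreover have "(s * eps) * (n / dd) = 3 * eps * n" using dd by (simp add: s_def)
    ultimately have gu: "(s * eps) * D1 x u \<ge> 3 * eps * n" by simp
    have gh: "D1 x h \<ge> eps * n"
    proof -
      have "D1 x h = (s * eps) * D1 x u + D1 x e"
        by (simp add: h_def blinfun.add_right blinfun.scaleR_right)
      moreover have "n * (2 * eps) = 2 * (eps * n)" "3 * eps * n = 3 * (eps * n)" by simp_all
      ultimately show ?thesis using gu ge by linarith
    qed
    have h2: "(norm h)^2 \<le> ((s + 2) * eps)^2" using nh by (intro power_mono) auto
    have "M * (norm h)^2 \<le> M * ((s + 2) * eps)^2" using h2 M0 by (intro mult_left_mono)
    also have "\<dots> = eps * (M * (s + 2)^2 * eps)" by (simp add: power2_eq_square algebra_simps)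
    also have "\<dots> < eps * n"
      using big eps by (simp add: n_def s_def dd_def)
    finally have "M * (norm h)^2 < eps * n" .
    moreover have "p (x + h) \<ge> p x + D1 x h - M * (norm h)^2"
      by (rule taylor_lower[OF D1 D2 M])
    ultimately have "p (x + h) > p x" using gh by linarith
    then show "p z > p x" using zh by simp
  qed
qed

lemma finite_min_pos:
  assumes "finite S" "\<forall>m\<in>S. (f m :: real) > 0"
  shows "\<exists>d>0. \<forall>m\<in>S. d \<le> f m"
  using assms
proof (induction S rule: finite_induct)
  case empty then show ?case by (intro exI[of _ 1]) auto
next
  case (insert a S)
  then obtain d where "d > 0" "\<forall>m\<in>S. d \<le> f m" by auto
  then show ?case using insert.prems by (intro exI[of _ "min d (f a)"]) auto
qed

lemma finite_max:
  assumes "finite S"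
  shows "\<exists>L. \<forall>m\<in>S. (f m :: real) \<le> L"
  using assms
proof (induction S rule: finite_induct)
  case empty then show ?case by auto
next
  case (insert a S)
  then obtain L where "\<forall>m\<in>S. f m \<le> L" by auto
  then show ?case by (intro exI[of _ "max L (f a)"]) auto
qed

lemma core:
  fixes p :: "'a::euclidean_space \<Rightarrow> real"
    and D1 :: "'a \<Rightarrow> ('a \<Rightarrow>\<^sub>L real)"
    and D2 :: "'a \<Rightarrow> ('a \<Rightarrow>\<^sub>L ('a \<Rightarrow>\<^sub>L real))"
  assumes D1: "\<forall>x. (p has_derivative blinfun_apply (D1 x)) (at x)"
    and D2: "\<forall>x. (D1 has_derivative blinfun_apply (D2 x)) (at x)"
    and cont1: "continuous_on UNIV D1" and cont2: "continuous_on UNIV D2"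
    and M: "\<forall>x. norm (D2 x) \<le> M"
    and morse: "morse D1 D2"
    and CC: "compact CC"
  shows "\<exists>c1>0. \<exists>c2>0. \<exists>e0>0. \<forall>eps. 0 < eps \<and> eps < e0 \<longrightarrow>
     (\<forall>x\<in>CC. x \<notin> (\<Union>m\<in>{m. strict_local_max p m}. ball m (c1 * eps)) \<longrightarrow>
        (\<exists>c. (\<forall>z\<in>cball c (2 * eps). dist z x \<le> c2 * eps) \<and> x \<notin> cball c (2 * eps) \<and>
             (\<forall>z\<in>cball c (2 * eps). p z > p x)))"
proof -
  define S where "S = {x. D1 x = 0}"
  have finS: "finite S" using morse by (simp add: morse_def S_def)
  have nd: "\<forall>h. D2 m h = 0 \<longrightarrow> h = 0" if "m \<in> S" for m
    using morse that by (simp add: morse_def S_def)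
  have M0: "M \<ge> 0" using M norm_ge_zero order_trans by blast
  define dd where "dd = 3 * real DIM('a) + 2"
  have dd: "dd > 0" by (simp add: dd_def)
  define A where "A = M * dd^2"
  have A: "A \<ge> 0" using M0 by (simp add: A_def)
  have "\<forall>m\<in>S. \<exists>l>0. \<exists>d>0. \<forall>x. norm (x - m) < d \<longrightarrow> norm (D1 x) \<ge> l * norm (x - m)"
    using grad_near_crit[OF D2] nd by (auto simp: S_def)
  then obtain lf df where lf: "\<forall>m\<in>S. lf m > 0 \<and> df m > 0 \<and>
      (\<forall>x. norm (x - m) < df m \<longrightarrow> norm (D1 x) \<ge> lf m * norm (x - m))"
    by metis
  obtain l0 where l0: "l0 > 0" "\<forall>m\<in>S. l0 \<le> lf m" using finite_min_pos[OF finS, of lf] lf by auto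
  obtain d0 where d0: "d0 > 0" "\<forall>m\<in>S. d0 \<le> df m" using finite_min_pos[OF finS, of df] lf by auto
  define R where "R = CC \<inter> - (\<Union>m\<in>S. ball m d0)"
  have cR: "compact R" unfolding R_def
    by (intro compact_Int_closed CC closed_Compl open_UN) auto
  have "\<exists>g0>0. \<forall>x\<in>R. norm (D1 x) \<ge> g0"
  proof (cases "R = {}")
    case True then show ?thesis by (intro exI[of _ 1]) auto
  next
    case False
    have "continuous_on R (\<lambda>x. norm (D1 x))"
      by (intro continuous_on_norm continuous_on_subset[OF cont1]) auto
    from continuous_attains_inf[OF cR False this] obtain x0 where
      x0: "x0 \<in> R" "\<forall>y\<in>R. norm (D1 x0) \<le> norm (D1 y)" by blast
    have "x0 \<notin> S"
    proof
      assume "x0 \<in> S"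
      then have "x0 \<in> (\<Union>m\<in>S. ball m d0)" using d0 by (intro UN_I[of x0]) auto
      then show False using x0 by (auto simp: R_def)
    qed
    then have "norm (D1 x0) > 0" by (simp add: S_def)
    then show ?thesis using x0 by blast
  qed
  then obtain g0 where g0: "g0 > 0" "\<forall>x\<in>R. norm (D1 x) \<ge> g0" by blast
  define K where "K = (A + 1) / l0"
  have K: "K > 0" using A l0 by (simp add: K_def)
  define S' where "S' = S \<inter> {m. \<not> strict_local_max p m}"
  have finS': "finite S'" using finS by (simp add: S'_def)
  have "\<forall>m\<in>S'. \<exists>L>0. \<exists>e0>0. \<forall>eps. 0 < eps \<and> eps < e0 \<longrightarrow> (\<forall>x. norm (x - m) \<le> K * eps \<longrightarrow>
     (\<exists>c. (\<forall>z\<in>cball c (2 * eps). dist z x \<le> L * eps) \<and> x \<notin> cball c (2 * eps) \<and>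
          (\<forall>z\<in>cball c (2 * eps). p z > p x)))"
  proof
    fix m assume m: "m \<in> S'"
    show "\<exists>L>0. \<exists>e0>0. \<forall>eps. 0 < eps \<and> eps < e0 \<longrightarrow> (\<forall>x. norm (x - m) \<le> K * eps \<longrightarrow>
     (\<exists>c. (\<forall>z\<in>cball c (2 * eps). dist z x \<le> L * eps) \<and> x \<notin> cball c (2 * eps) \<and>
          (\<forall>z\<in>cball c (2 * eps). p z > p x)))"
      by (rule saddle[OF D1 D2 cont2 _ _ _ K]) (use m nd in \<open>auto simp: S'_def S_def\<close>)
  qed
  then obtain Lf ef where Lf: "\<forall>m\<in>S'. Lf m > 0 \<and> ef m > 0 \<and>
     (\<forall>eps. 0 < eps \<and> eps < ef m \<longrightarrow> (\<forall>x. norm (x - m) \<le> K * eps \<longrightarrow>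
     (\<exists>c. (\<forall>z\<in>cball c (2 * eps). dist z x \<le> Lf m * eps) \<and> x \<notin> cball c (2 * eps) \<and>
          (\<forall>z\<in>cball c (2 * eps). p z > p x))))"
    by metis
  obtain L0 where L0: "\<forall>m\<in>S'. Lf m \<le> L0" using finite_max[OF finS', of Lf] by auto
  obtain e1 where e1: "e1 > 0" "\<forall>m\<in>S'. e1 \<le> ef m" using finite_min_pos[OF finS', of ef] Lf by auto
  define c2 where "c2 = dd + \<bar>L0\<bar>"
  define e0 where "e0 = min e1 (g0 / (A + 1))"
  have e0: "e0 > 0" using e1 g0 A by (simp add: e0_def)
  have main: "\<forall>eps. 0 < eps \<and> eps < e0 \<longrightarrow>
     (\<forall>x\<in>CC. x \<notin> (\<Union>m\<in>{m. strict_local_max p m}. ball m ((K + 1) * eps)) \<longrightarrow>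
        (\<exists>c. (\<forall>z\<in>cball c (2 * eps). dist z x \<le> c2 * eps) \<and> x \<notin> cball c (2 * eps) \<and>
             (\<forall>z\<in>cball c (2 * eps). p z > p x)))"
  proof (intro allI impI ballI)
    fix eps x assume eps: "0 < eps \<and> eps < e0" and x: "x \<in> CC"
      and xn: "x \<notin> (\<Union>m\<in>{m. strict_local_max p m}. ball m ((K + 1) * eps))"
    show "\<exists>c. (\<forall>z\<in>cball c (2 * eps). dist z x \<le> c2 * eps) \<and> x \<notin> cball c (2 * eps) \<and>
             (\<forall>z\<in>cball c (2 * eps). p z > p x)"
    proof (cases "norm (D1 x) > A * eps")
      case True
      then have "norm (D1 x) > M * (3 * real DIM('a) + 2)^2 * eps" by (simp add: A_def dd_def)
      from grad_step[OF D1 D2 M _ this] eps obtain c where c: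
        "\<forall>z\<in>cball c (2 * eps). dist z x \<le> (3 * real DIM('a) + 2) * eps"
        "x \<notin> cball c (2 * eps)" "\<forall>z\<in>cball c (2 * eps). p z > p x" by blast
      have "(3 * real DIM('a) + 2) * eps \<le> c2 * eps"
        using eps by (intro mult_right_mono) (auto simp: c2_def dd_def)
      then show ?thesis using c by (intro exI[of _ c]) force
    next
      case False
      then have gx: "norm (D1 x) \<le> A * eps" by simp
      have "A * eps < g0"
      proof -
        have "eps < g0 / (A + 1)" using eps by (simp add: e0_def)
        then have "eps * (A + 1) < g0" using A by (simp add: field_simps)
        then show ?thesis using eps by (simp add: algebra_simps)
      qed
      then have "x \<notin> R" using g0 gx by force
      then obtain m where m: "m \<in> S" "x \<in> ball m d0" using x by (auto simp: R_def)
      have xm: "norm (x - m) < df m" using m d0 by (auto simp: dist_norm norm_minus_commute)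
      have "lf m * norm (x - m) \<le> A * eps" using lf m(1) xm gx by force
      moreover have "l0 * norm (x - m) \<le> lf m * norm (x - m)" using l0 m(1) by (intro mult_right_mono) auto
      ultimately have "l0 * norm (x - m) \<le> A * eps" by linarith
      then have "norm (x - m) \<le> A * eps / l0" using l0 by (simp add: field_simps)
      also have "\<dots> \<le> K * eps" using eps l0 by (simp add: K_def field_simps)
      finally have xK: "norm (x - m) \<le> K * eps" .
      show ?thesis
      proof (cases "strict_local_max p m")
        case True
        have "norm (x - m) < (K + 1) * eps" using xK eps by (simp add: algebra_simps)
        then have "x \<in> ball m ((K + 1) * eps)" by (simp add: dist_norm norm_minus_commute)
        then show ?thesis using xn True by blast
      next
        case False
        then have mS': "m \<in> S'" using m by (simp add: S'_def)
        have "eps < ef m" using eps e1 mS' by (simp add: e0_def) (meson less_le_trans min.strict_boundedE)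
        then obtain c where c:
          "\<forall>z\<in>cball c (2 * eps). dist z x \<le> Lf m * eps"
          "x \<notin> cball c (2 * eps)" "\<forall>z\<in>cball c (2 * eps). p z > p x"
          using Lf mS' eps xK by blast
        have "Lf m * eps \<le> c2 * eps"
          using eps L0 mS' dd by (intro mult_right_mono) (auto simp: c2_def)
        then show ?thesis using c by (intro exI[of _ c]) force
      qed
    qed
  qed
  have "K + 1 > 0" "c2 > 0" using K dd by (auto simp: c2_def)
  then show ?thesis using main e0 by blast
qed

theorem lemma4:
  fixes p :: "'a::euclidean_space \<Rightarrow> real"
    and D1 :: "'a \<Rightarrow> ('a \<Rightarrow>\<^sub>L real)"
    and D2 :: "'a \<Rightarrow> ('a \<Rightarrow>\<^sub>L ('a \<Rightarrow>\<^sub>L real))"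
    and D3 :: "'a \<Rightarrow> ('a \<Rightarrow>\<^sub>L ('a \<Rightarrow>\<^sub>L ('a \<Rightarrow>\<^sub>L real)))"
    and CC :: "'a set" and a r C :: real
  assumes density: "\<forall>x. 0 \<le> p x" "(p has_integral 1) UNIV"
    and CC: "compact CC"
    and p_bdd: "bounded (range p)" and p_cont: "continuous_on UNIV p"
    and a_pos: "a > 0" and p_lower: "\<forall>x\<in>CC. a \<le> p x"
    and D1: "\<forall>x. (p has_derivative blinfun_apply (D1 x)) (at x)"
    and D2: "\<forall>x. (D1 has_derivative blinfun_apply (D2 x)) (at x)"
    and D3: "\<forall>x. (D2 has_derivative blinfun_apply (D3 x)) (at x)"
    and D_cont: "continuous_on UNIV D1" "continuous_on UNIV D2" "continuous_on UNIV D3"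
    and D_bdd: "bounded (range D1)" "bounded (range D2)" "bounded (range D3)"
    and morse: "morse D1 D2"
    and r_pos: "r > 0" and C_pos: "C > 0"
  shows "\<exists>c1>0. \<exists>c2>0. \<exists>N::nat. \<forall>n\<ge>N.
     (let eps = (r * ln (real n) / real n) powr (1 / real DIM('a)) in
      \<forall>x\<in>CC. x \<notin> (\<Union>m\<in>{m. strict_local_max p m}. ball m (c1 * eps)) \<longrightarrow>
        (\<exists>c. (\<forall>z\<in>cball c (2 * eps).
                 dist z x \<le> c2 * (C * ln (real n) / (real n * p x)) powr (1 / real DIM('a))) \<and>
             x \<notin> cball c (2 * eps) \<and>
             (\<forall>z\<in>cball c (2 * eps). p z > p x)))"
proof -
  obtain M where M: "\<forall>x. norm (D2 x) \<le> M" using D_bdd(2) unfolding bounded_iff by blast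
  obtain c1 c2 e0 where c1: "c1 > 0" and c2: "c2 > 0" and e0: "e0 > 0" and
    core: "\<forall>eps. 0 < eps \<and> eps < e0 \<longrightarrow>
     (\<forall>x\<in>CC. x \<notin> (\<Union>m\<in>{m. strict_local_max p m}. ball m (c1 * eps)) \<longrightarrow>
        (\<exists>c. (\<forall>z\<in>cball c (2 * eps). dist z x \<le> c2 * eps) \<and> x \<notin> cball c (2 * eps) \<and>
             (\<forall>z\<in>cball c (2 * eps). p z > p x)))"
    apply (insert core[OF D1 D2 D_cont(1) D_cont(2) M morse CC])
    apply (elim exE conjE)
    apply (rule that)
       prefer 4 apply assumption
      apply assumption+
    done
  obtain B0 where B0: "\<forall>x. norm (p x) \<le> B0" using p_bdd unfolding bounded_iff by blast
  define B where "B = max B0 1"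
  have B: "B > 0" "\<And>x. p x \<le> B"
  proof -
    show "B > 0" by (simp add: B_def)
    fix x
    have "p x \<le> B0" using B0[rule_format, of x] by simp
    then show "p x \<le> B" by (simp add: B_def)
  qed
  define ex where "ex = 1 / real DIM('a)"
  have ex: "ex > 0" by (simp add: ex_def)
  define c2' where "c2' = c2 * (r * B / C) powr ex"
  have c2': "c2' > 0" using c2 r_pos B C_pos by (simp add: c2'_def)
  define epsn where "epsn n = (r * ln (real n) / real n) powr ex" for n :: nat
  have "(\<lambda>n. r * (ln (real n) / real n)) \<longlonglongrightarrow> r * 0"
    by (intro tendsto_intros)
  then have lim0: "(\<lambda>n. r * ln (real n) / real n) \<longlonglongrightarrow> 0" by simp
  have "epsn \<longlonglongrightarrow> 0" unfolding epsn_def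
  proof (rule tendsto_zero_powrI[OF lim0 tendsto_const _ ex])
    show "\<forall>\<^sub>F n in sequentially. 0 \<le> r * ln (real n) / real n"
    proof (rule eventually_sequentiallyI[of 1])
      fix n :: nat assume "1 \<le> n"
      then show "0 \<le> r * ln (real n) / real n"
        using r_pos by (auto intro!: divide_nonneg_nonneg mult_nonneg_nonneg)
    qed
  qed
  then have "\<forall>\<^sub>F n in sequentially. epsn n < e0" using e0 by (rule order_tendstoD)
  then obtain N0 where N0: "\<forall>n\<ge>N0. epsn n < e0" unfolding eventually_sequentially by blast
  define N where "N = max N0 2"
  show ?thesis
  proof (rule exI[of _ c1], rule conjI[OF c1], rule exI[of _ c2'], rule conjI[OF c2'],
      rule exI[of _ N], intro allI impI)
    fix n :: nat assume n: "N \<le> n"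
    have n2: "n \<ge> 2" using n by (simp add: N_def)
    have lnpos: "ln (real n) > 0" using n2 by simp
    have epos: "epsn n > 0" using lnpos n2 r_pos by (simp add: epsn_def)
    have esmall: "epsn n < e0" using N0 n by (simp add: N_def)
    have C2: "\<forall>x\<in>CC. x \<notin> (\<Union>m\<in>{m. strict_local_max p m}. ball m (c1 * epsn n)) \<longrightarrow>
        (\<exists>c. (\<forall>z\<in>cball c (2 * epsn n). dist z x \<le> c2 * epsn n) \<and> x \<notin> cball c (2 * epsn n) \<and>
             (\<forall>z\<in>cball c (2 * epsn n). p z > p x))"
      using mp[OF spec[OF core, of "epsn n"] conjI[OF epos esmall]] .
    have bound: "c2 * epsn n \<le> c2' * (C * ln (real n) / (real n * p x)) powr ex" if x: "x \<in> CC" for x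
    proof -
      have "a \<le> p x" using p_lower x by blast
      then have px: "p x > 0" using a_pos by linarith
      have npos: "real n > 0" using n2 by simp
      have eq: "r * ln (real n) / real n = (r * p x / C) * (C * ln (real n) / (real n * p x))"
        using px C_pos npos by (simp add: field_simps)
      have "epsn n = ((r * p x / C) * (C * ln (real n) / (real n * p x))) powr ex"
        unfolding epsn_def eq ..
      also have "\<dots> = (r * p x / C) powr ex * (C * ln (real n) / (real n * p x)) powr ex"
        by (rule powr_mult)
      also have "\<dots> \<le> (r * B / C) powr ex * (C * ln (real n) / (real n * p x)) powr ex"
      proof (rule mult_right_mono)
        have "r * p x \<le> r * B" using r_pos B(2)[of x] by simp
        then have "r * p x / C \<le> r * B / C"
          using C_pos by (intro divide_right_mono) auto
        moreover have "0 \<le> r * p x / C" using r_pos px C_pos by simp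
        ultimately show "(r * p x / C) powr ex \<le> (r * B / C) powr ex"
          using ex by (intro powr_mono2) auto
      qed simp
      finally have "epsn n \<le> (r * B / C) powr ex * (C * ln (real n) / (real n * p x)) powr ex" .
      then have "c2 * epsn n \<le> c2 * ((r * B / C) powr ex * (C * ln (real n) / (real n * p x)) powr ex)"
        using c2 by (intro mult_left_mono) auto
      then show ?thesis by (simp add: c2'_def mult.assoc)
    qed
    have ex_eq: "1 / real DIM('a) = ex" by (simp add: ex_def)
    show "let eps = (r * ln (real n) / real n) powr (1 / real DIM('a)) in
      \<forall>x\<in>CC. x \<notin> (\<Union>m\<in>{m. strict_local_max p m}. ball m (c1 * eps)) \<longrightarrow>
        (\<exists>c. (\<forall>z\<in>cball c (2 * eps).
                 dist z x \<le> c2' * (C * ln (real n) / (real n * p x)) powr (1 / real DIM('a))) \<and>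
             x \<notin> cball c (2 * eps) \<and>
             (\<forall>z\<in>cball c (2 * eps). p z > p x))"
      unfolding Let_def ex_eq epsn_def[symmetric]
    proof (intro ballI impI)
      fix x assume x: "x \<in> CC"
        and xn: "x \<notin> (\<Union>m\<in>{m. strict_local_max p m}. ball m (c1 * epsn n))"
      obtain c where c:
        "\<forall>z\<in>cball c (2 * epsn n). dist z x \<le> c2 * epsn n" "x \<notin> cball c (2 * epsn n)"
        "\<forall>z\<in>cball c (2 * epsn n). p z > p x"
        using C2[rule_format, OF x xn] by blast
      show "\<exists>c. (\<forall>z\<in>cball c (2 * epsn n).
                 dist z x \<le> c2' * (C * ln (real n) / (real n * p x)) powr ex) \<and>
             x \<notin> cball c (2 * epsn n) \<and> (\<forall>z\<in>cball c (2 * epsn n). p z > p x)"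
      proof (intro exI[of _ c] conjI ballI)
        fix z assume "z \<in> cball c (2 * epsn n)"
        then show "dist z x \<le> c2' * (C * ln (real n) / (real n * p x)) powr ex"
          using c(1) bound[OF x] by (meson order_trans)
      qed (use c in auto)
    qed
  qed
qed

end
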